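(* Let $X_n=\{0,1\}^n\setminus\{0^n\}$ and let $\mathcal{C}_n$ be the class of negative parity functions over $X_n$, i.e. $\lnot\oplus_s:X_n\to\{0,1\}$, $\lnot\oplus_s(x)=1-(s\cdot x\bmod 2)$, for $s\in\{0,1\}^n$. For any query function $g:\{0,1\}^n\to\{-1,+1\}$, there are at most $2^{n/2+2}$ predicates in $\mathcal{C}_n$ that are not $2^{-n/4}$-independent from $g$.
   Context: For $f\in\mathcal{C}_n$ let $S_f=\{x\in X_n: f(x)=1\}$. A predicate $f$ is $\xi$-independent from $g$ if $\left|\mathbf{E}_{x\in S_f}[g(x)]-\mathbf{E}_{x\in\{0,1\}^n}[g(x)]\right|\le\xi$, expectations over the uniform distribution on the indicated sets. *)

theory Defs
  imports Complex_Main "HOL-Library.FuncSet"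
begin

definition cube :: "nat \<Rightarrow> bool list set" where
  "cube n = {x. length x = n}"

definition Xn :: "nat \<Rightarrow> bool list set" where
  "Xn n = cube n - {replicate n False}"

definition dotmod2 :: "nat \<Rightarrow> bool list \<Rightarrow> bool list \<Rightarrow> nat" where
  "dotmod2 n s x = (\<Sum>i<n. if s ! i \<and> x ! i then 1 else 0) mod 2"

definition negpar :: "nat \<Rightarrow> bool list \<Rightarrow> (bool list \<Rightarrow> real)" where
  "negpar n s = (\<lambda>x\<in>Xn n. 1 - real (dotmod2 n s x))"

definition Cn :: "nat \<Rightarrow> (bool list \<Rightarrow> real) set" where
  "Cn n = negpar n ` cube n"

definition Sf :: "nat \<Rightarrow> (bool list \<Rightarrow> real) \<Rightarrow> bool list set" where
  "Sf n f = {x \<in> Xn n. f x = 1}"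

text \<open>Expectation under the uniform distribution on a finite set (0 on the empty set).\<close>
definition avg :: "bool list set \<Rightarrow> (bool list \<Rightarrow> real) \<Rightarrow> real" where
  "avg A g = (\<Sum>x\<in>A. g x) / real (card A)"

definition xi_independent ::
  "nat \<Rightarrow> real \<Rightarrow> (bool list \<Rightarrow> real) \<Rightarrow> (bool list \<Rightarrow> real) \<Rightarrow> bool" where
  "xi_independent n \<xi> f g \<longleftrightarrow> \<bar>avg (Sf n f) g - avg (cube n) g\<bar> \<le> \<xi>"

end

theory Submission
  imports Defs
begin

lemma cube_eq: "cube n = {xs. set xs \<subseteq> UNIV \<and> length xs = n}"
  unfolding cube_def by auto

lemma finite_cube[simp]: "finite (cube n)"
  unfolding cube_eq by (rule finite_lists_length_eq) simp

lemma card_cube: "card (cube n) = 2 ^ n"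
  using card_lists_length_eq[of "UNIV::bool set" n] by (simp add: cube_def)

lemma cube_Suc: "cube (Suc n) = (\<lambda>(b,s). b # s) ` (UNIV \<times> cube n)"
  unfolding cube_def
  by (auto simp: image_iff length_Suc_conv)

lemma sum_prod_cube:
  fixes f :: "nat \<Rightarrow> bool \<Rightarrow> real"
  shows "(\<Sum>s\<in>cube n. \<Prod>i<n. f i (s!i)) = (\<Prod>i<n. f i True + f i False)"
proof (induction n arbitrary: f)
  case 0
  have "cube 0 = {[]}" unfolding cube_def by auto
  then show ?case by simp
next
  case (Suc n)
  have inj: "inj_on (\<lambda>(b,s). b # s) (UNIV \<times> cube n)"
    by (auto simp: inj_on_def)
  have "(\<Sum>s\<in>cube (Suc n). \<Prod>i<Suc n. f i (s!i))
      = (\<Sum>(b,s)\<in>UNIV \<times> cube n. \<Prod>i<Suc n. f i ((b#s)!i))"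
    unfolding cube_Suc by (subst sum.reindex[OF inj]) (simp add: case_prod_unfold)
  also have "\<dots> = (\<Sum>(b,s)\<in>UNIV \<times> cube n. f 0 b * (\<Prod>i<n. f (Suc i) (s!i)))"
    by (simp add: prod.lessThan_Suc_shift del: prod.lessThan_Suc)
  also have "\<dots> = (\<Sum>b\<in>UNIV. f 0 b * (\<Sum>s\<in>cube n. \<Prod>i<n. f (Suc i) (s!i)))"
    by (simp add: sum.cartesian_product[symmetric] sum_distrib_left)
  also have "\<dots> = (f 0 True + f 0 False) * (\<Prod>i<n. f (Suc i) True + f (Suc i) False)"
    using Suc[of "\<lambda>i. f (Suc i)"] by (simp add: UNIV_bool algebra_simps)
  also have "\<dots> = (\<Prod>i<Suc n. f i True + f i False)"
    by (simp add: prod.lessThan_Suc_shift del: prod.lessThan_Suc)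
  finally show ?case .
qed

definition chi :: "nat \<Rightarrow> bool list \<Rightarrow> bool list \<Rightarrow> real" where
  "chi n s x = (\<Prod>i<n. if s!i \<and> x!i then -1 else 1)"

lemma chi_sym: "chi n s x = chi n x s"
  unfolding chi_def by (rule prod.cong) auto

lemma orth:
  assumes "x \<in> cube n" "y \<in> cube n"
  shows "(\<Sum>s\<in>cube n. chi n s x * chi n s y) = (if x = y then 2 ^ n else 0)"
proof -
  define f where "f = (\<lambda>i b. (if b \<and> x!i then -1 else 1) * (if b \<and> y!i then -1 else (1::real)))"
  have "chi n s x * chi n s y = (\<Prod>i<n. f i (s!i))" for s
    unfolding chi_def f_def prod.distrib[symmetric] by (rule refl)
  hence "(\<Sum>s\<in>cube n. chi n s x * chi n s y) = (\<Sum>s\<in>cube n. \<Prod>i<n. f i (s!i))"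
    by (simp only:)
  also have "\<dots> = (\<Prod>i<n. f i True + f i False)"
    by (rule sum_prod_cube)
  also have "\<dots> = (\<Prod>i<n. (if x!i = y!i then 2 else 0))"
  proof (rule prod.cong[OF refl])
    fix i show "f i True + f i False = (if x!i = y!i then 2 else 0)"
      unfolding f_def by (cases "x!i"; cases "y!i") simp_all
  qed
  also have "\<dots> = (if x = y then 2 ^ n else 0)"
  proof (cases "x = y")
    case True then show ?thesis by simp
  next
    case False
    have len: "length x = n" "length y = n" using assms unfolding cube_def by auto
    have "\<exists>i<n. x!i \<noteq> y!i"
    proof (rule ccontr)
      assume "\<not> (\<exists>i<n. x!i \<noteq> y!i)"
      hence "x = y" using len by (intro nth_equalityI) auto
      thus False using False by simp
    qed
    then obtain i where i: "i < n" "x!i \<noteq> y!i" by blast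
    have "(\<Prod>i<n. (if x!i = y!i then 2 else 0)) = (0::real)"
      by (rule prod_zero[of "{..<n}"]) (use i in auto)
    then show ?thesis using False by simp
  qed
  finally show ?thesis .
qed

lemma chi_dot: "(1 + chi n s x) / 2 = (if dotmod2 n s x = 0 then 1 else 0)"
proof -
  have "chi n s x = (-1) ^ (\<Sum>i<n. if s ! i \<and> x ! i then 1 else 0)"
    unfolding chi_def power_sum by (rule prod.cong) auto
  moreover have "(-1::real) ^ k = (if even k then 1 else -1)" for k :: nat
    by (cases "even k") auto
  ultimately show ?thesis unfolding dotmod2_def
    by (simp add: even_iff_mod_2_eq_zero)
qed

definition DD :: "nat \<Rightarrow> (bool list \<Rightarrow> real) \<Rightarrow> bool list \<Rightarrow> real" where
  "DD n g s = (\<Sum>x\<in>cube n. g x * chi n s x)"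

lemma zero_cube: "replicate n False \<in> cube n" by (simp add: cube_def)

lemma chi_zero: "chi n s (replicate n False) = 1"
  unfolding chi_def by (rule prod.neutral) auto

lemma dot_zero: "dotmod2 n s (replicate n False) = 0"
  unfolding dotmod2_def by (subst sum.neutral) auto

lemma dot_01: "dotmod2 n s x = 0 \<or> dotmod2 n s x = 1"
  unfolding dotmod2_def by auto

lemma Sf_negpar:
  "Sf n (negpar n s) = {x\<in>cube n. dotmod2 n s x = 0} - {replicate n False}"
  unfolding Sf_def negpar_def Xn_def by auto

lemma sum_chi:
  assumes "s \<in> cube n"
  shows "(\<Sum>x\<in>cube n. chi n s x) = (if s = replicate n False then 2^n else 0)"
proof -
  have "(\<Sum>x\<in>cube n. chi n s x) = (\<Sum>x\<in>cube n. chi n x s * chi n x (replicate n False))"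
    by (simp add: chi_zero chi_sym)
  also have "\<dots> = (if s = replicate n False then 2^n else 0)"
    by (rule orth[OF assms zero_cube])
  finally show ?thesis .
qed

lemma sumA:
  "(\<Sum>x\<in>{x\<in>cube n. dotmod2 n s x = 0}. g x) = ((\<Sum>x\<in>cube n. g x) + DD n g s) / 2"
proof -
  have "(\<Sum>x\<in>{x\<in>cube n. dotmod2 n s x = 0}. g x)
      = (\<Sum>x\<in>cube n. if dotmod2 n s x = 0 then g x else 0)"
    by (rule sum.inter_filter) simp
  also have "\<dots> = (\<Sum>x\<in>cube n. (g x + g x * chi n s x) / 2)"
  proof (rule sum.cong[OF refl])
    fix x
    have "(g x + g x * chi n s x) / 2 = g x * ((1 + chi n s x) / 2)" by (simp add: algebra_simps)
    also have "\<dots> = g x * (if dotmod2 n s x = 0 then 1 else 0)" by (simp only: chi_dot)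
    finally show "(if dotmod2 n s x = 0 then g x else 0) = (g x + g x * chi n s x) / 2" by simp
  qed
  also have "\<dots> = ((\<Sum>x\<in>cube n. g x) + DD n g s) / 2"
    unfolding DD_def sum_divide_distrib[symmetric] sum.distrib ..
  finally show ?thesis .
qed

lemma cardA:
  assumes "s \<in> cube n"
  shows "real (card {x\<in>cube n. dotmod2 n s x = 0}) = (2^n + (if s = replicate n False then 2^n else 0)) / 2"
proof -
  have "real (card {x\<in>cube n. dotmod2 n s x = 0}) = (\<Sum>x\<in>{x\<in>cube n. dotmod2 n s x = 0}. 1)"
    by simp
  also have "\<dots> = ((\<Sum>x\<in>cube n. 1) + DD n (\<lambda>_. 1) s) / 2"
    by (rule sumA)
  also have "\<dots> = (2^n + (if s = replicate n False then 2^n else 0)) / 2"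
    unfolding DD_def using sum_chi[OF assms] by (simp add: card_cube)
  finally show ?thesis .
qed

lemma parseval:
  assumes "\<forall>x\<in>cube n. g x = -1 \<or> g x = 1"
  shows "(\<Sum>s\<in>cube n. (DD n g s)^2) = (2^n)^2"
proof -
  have "(\<Sum>s\<in>cube n. (DD n g s)^2)
      = (\<Sum>s\<in>cube n. \<Sum>x\<in>cube n. \<Sum>y\<in>cube n. g x * g y * (chi n s x * chi n s y))"
  proof (rule sum.cong[OF refl])
    fix s
    have "(DD n g s)^2 = (\<Sum>x\<in>cube n. \<Sum>y\<in>cube n. (g x * chi n s x) * (g y * chi n s y))"
      unfolding DD_def power2_eq_square sum_product ..
    also have "\<dots> = (\<Sum>x\<in>cube n. \<Sum>y\<in>cube n. g x * g y * (chi n s x * chi n s y))"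
      by (simp only: mult_ac)
    finally show "(DD n g s)^2 = \<dots>" .
  qed
  also have "\<dots> = (\<Sum>x\<in>cube n. \<Sum>s\<in>cube n. \<Sum>y\<in>cube n. g x * g y * (chi n s x * chi n s y))"
    by (rule sum.swap)
  also have "\<dots> = (\<Sum>x\<in>cube n. \<Sum>y\<in>cube n. \<Sum>s\<in>cube n. g x * g y * (chi n s x * chi n s y))"
    by (rule sum.cong[OF refl], rule sum.swap)
  also have "\<dots> = (\<Sum>x\<in>cube n. \<Sum>y\<in>cube n. g x * g y * (\<Sum>s\<in>cube n. chi n s x * chi n s y))"
    by (simp only: sum_distrib_left)
  also have "\<dots> = (\<Sum>x\<in>cube n. \<Sum>y\<in>cube n. g x * g y * (if x = y then 2^n else 0))"
    by (intro sum.cong refl) (simp only: orth)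
  also have "\<dots> = (\<Sum>x\<in>cube n. g x * g x * 2^n)"
  proof (rule sum.cong[OF refl])
    fix x assume x: "x \<in> cube n"
    have "(\<Sum>y\<in>cube n. g x * g y * (if x = y then 2^n else 0)) = (\<Sum>y\<in>cube n. if y = x then g x * g y * 2^n else 0)"
      by (rule sum.cong) auto
    also have "\<dots> = g x * g x * 2^n" using x by (simp add: sum.delta)
    finally show "(\<Sum>y\<in>cube n. g x * g y * (if x = y then 2^n else 0)) = g x * g x * 2^n" .
  qed
  also have "\<dots> = (\<Sum>x\<in>cube n. 2^n)"
    using assms by (intro sum.cong refl) auto
  also have "\<dots> = (2^n)^2"
    by (simp add: card_cube power2_eq_square)
  finally show ?thesis .
qed

lemma key:
  assumes g: "\<forall>x\<in>cube n. g x = -1 \<or> g x = 1"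
    and s: "s \<in> cube n" "s \<noteq> replicate n False" and n: "n \<ge> 2"
    and bad: "\<not> xi_independent n e (negpar n s) g"
  shows "e * (2^n - 2) - 4 < \<bar>DD n g s\<bar>"
proof -
  define N :: real where "N = 2^n"
  define M where "M = (\<Sum>x\<in>cube n. g x)"
  define Z where "Z = g (replicate n False)"
  define D where "D = DD n g s"
  define A where "A = {x\<in>cube n. dotmod2 n s x = 0}"
  have N4: "N \<ge> 4" unfolding N_def using power_increasing[OF n, of "2::real"] by simp
  have pos: "N/2 - 1 > 0" using N4 by simp
  have zA: "replicate n False \<in> A" unfolding A_def by (simp add: zero_cube dot_zero)
  have finA: "finite A" unfolding A_def by simp
  have cA: "real (card A) = N / 2" unfolding A_def N_def using cardA[OF s(1)] s(2) by simp
  have SA: "Sf n (negpar n s) = A - {replicate n False}" unfolding Sf_negpar A_def ..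
  have "card A \<noteq> 0" using zA finA by auto
  hence c1: "card A \<ge> 1" by simp
  have cS: "real (card (Sf n (negpar n s))) = N/2 - 1"
  proof -
    have "card (Sf n (negpar n s)) = card A - 1" unfolding SA using zA finA
      by (simp only: card_Diff_singleton)
    hence "real (card (Sf n (negpar n s))) = real (card A) - 1" using c1 by (simp add: of_nat_diff)
    thus ?thesis using cA by simp
  qed
  have sS: "(\<Sum>x\<in>Sf n (negpar n s). g x) = (M + D)/2 - Z"
  proof -
    have "(\<Sum>x\<in>Sf n (negpar n s). g x) = (\<Sum>x\<in>A. g x) - Z"
      unfolding SA Z_def using zA finA by (simp add: sum_diff1)
    also have "(\<Sum>x\<in>A. g x) = (M + D)/2" unfolding A_def M_def D_def by (rule sumA)
    finally show ?thesis .
  qed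
  have avgS: "avg (Sf n (negpar n s)) g = ((M + D)/2 - Z) / (N/2 - 1)"
    unfolding avg_def sS cS ..
  have avgC: "avg (cube n) g = M / N"
    unfolding avg_def M_def N_def by (simp add: card_cube)
  have absM: "\<bar>M\<bar> \<le> N"
  proof -
    have "\<bar>M\<bar> \<le> (\<Sum>x\<in>cube n. \<bar>g x\<bar>)" unfolding M_def by (rule sum_abs)
    also have "\<dots> = (\<Sum>x\<in>cube n. 1)" using g by (intro sum.cong) auto
    finally show ?thesis by (simp add: card_cube N_def)
  qed
  have absZ: "\<bar>Z\<bar> = 1" unfolding Z_def using g zero_cube[of n] by auto
  define X where "X = (M + D)/2 - Z"
  define a where "a = X / (N/2 - 1) - M / N"
  have ea: "e < \<bar>a\<bar>" using bad unfolding xi_independent_def avgS avgC a_def X_def by simp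
  have h1: "X / (N/2 - 1) * (N/2 - 1) = X" using pos by simp
  have h2: "M / N * (N/2 - 1) = M/2 - M/N" using N4 by (simp add: field_simps)
  have "a * (N/2 - 1) = X / (N/2 - 1) * (N/2 - 1) - M / N * (N/2 - 1)"
    unfolding a_def by (rule left_diff_distrib)
  also have "\<dots> = D/2 - Z + M/N" by (subst h1, subst h2, unfold X_def, simp add: add_divide_distrib)
  finally have h3: "a * (N/2 - 1) = D/2 - Z + M/N" .
  have "\<bar>a\<bar> * (N/2 - 1) = \<bar>a * (N/2 - 1)\<bar>" using pos by (simp add: abs_mult)
  also have "\<dots> = \<bar>D/2 - Z + M/N\<bar>" by (simp only: h3)
  also have "\<dots> \<le> \<bar>D/2 - Z\<bar> + \<bar>M/N\<bar>" by (rule abs_triangle_ineq)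
  also have "\<dots> \<le> \<bar>D\<bar>/2 + 2"
  proof -
    have "\<bar>M/N\<bar> = \<bar>M\<bar>/N" using N4 by simp
    also have "\<dots> \<le> 1" using absM N4 by simp
    finally have "\<bar>M/N\<bar> \<le> 1" .
    moreover have "\<bar>D/2 - Z\<bar> \<le> \<bar>D/2\<bar> + \<bar>Z\<bar>" by (rule abs_triangle_ineq4)
    moreover have "\<bar>D/2\<bar> = \<bar>D\<bar>/2" by simp
    ultimately show ?thesis using absZ by linarith
  qed
  finally have h4: "\<bar>a\<bar> * (N/2 - 1) \<le> \<bar>D\<bar>/2 + 2" .
  have "e * (N/2 - 1) < \<bar>a\<bar> * (N/2 - 1)" using ea pos by (rule mult_strict_right_mono)
  hence "e * (N/2 - 1) < \<bar>D\<bar>/2 + 2" using h4 by linarith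
  moreover have "e * (N - 2) = 2 * (e * (N/2 - 1))" by (simp add: algebra_simps)
  ultimately have "e * (N - 2) - 4 < \<bar>D\<bar>" by linarith
  thus ?thesis unfolding N_def D_def .
qed

lemma final_arith:
  fixes q c :: real
  assumes q: "q ^ 4 \<ge> 32" "q > 0" and c: "c * ((q^4 - 2) / q - 4)^2 \<le> (q^4)^2" "c \<ge> 0"
  shows "(q^4 - 2) / q - 4 > 0" "c + 1 \<le> 4 * q^2"
proof -
  have q1: "q \<ge> 2.37"
  proof (rule ccontr)
    assume "\<not> q \<ge> 2.37"
    hence "q ^ 4 \<le> 2.37 ^ 4" using q(2) by (intro power_mono) auto
    moreover have "(2.37::real) ^ 4 < 32" by (simp add: power_divide)
    ultimately show False using q(1) by linarith
  qed
  have q2: "q^2 \<ge> 5.6"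
  proof -
    have "(2.37::real)^2 \<ge> 5.6" by (simp add: power_divide)
    moreover have "(2.37::real)^2 \<le> q^2" by (rule power_mono[OF q1]) simp
    ultimately show ?thesis by linarith
  qed
  have q3: "q^3 \<ge> 13.3"
  proof -
    have "(2.37::real)^3 \<ge> 13.3" by (simp add: power_divide)
    moreover have "(2.37::real)^3 \<le> q^3" by (rule power_mono[OF q1]) simp
    ultimately show ?thesis by linarith
  qed
  have iq: "2 / q \<le> 1" using q1 by (simp add: divide_le_eq)
  have T: "(q^4 - 2) / q - 4 = q^3 - 2/q - 4" using q(2) by (simp add: field_simps power_eq_if)
  have T6: "(q^4 - 2) / q - 4 \<ge> 0.6 * q^3" unfolding T using q3 iq by linarith
  show "(q^4 - 2) / q - 4 > 0" using T6 q3 by linarith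
  have "(0.6 * q^3)^2 \<le> ((q^4 - 2) / q - 4)^2"
    using T6 q3 q(2) by (intro power_mono) auto
  moreover have "(0.6 * q^3)^2 = 0.36 * q^6"
  proof -
    have "q^6 = q^3 * q^3" by (simp flip: power_add)
    thus ?thesis by (simp add: power2_eq_square)
  qed
  ultimately have "0.36 * q^6 \<le> ((q^4 - 2) / q - 4)^2" by simp
  hence "c * (0.36 * q^6) \<le> c * ((q^4 - 2) / q - 4)^2"
    by (rule mult_left_mono) (rule c(2))
  moreover have "(q^4)^2 = q^2 * q^6" by (simp flip: power_add power_mult)
  moreover have "(c * 0.36) * q^6 = c * (0.36 * q^6)" by simp
  ultimately have "(c * 0.36) * q^6 \<le> q^2 * q^6" using c(1) by linarith
  hence "c * 0.36 \<le> q^2" by (rule mult_right_le_imp_le) (use q(2) in simp)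
  hence "c * 36 \<le> 100 * q^2" by simp
  thus "c + 1 \<le> 4 * q^2" using q2 by linarith
qed

theorem mainTheorem5:
  fixes n :: nat and g :: "bool list \<Rightarrow> real"
  assumes "\<forall>x\<in>cube n. g x = -1 \<or> g x = 1"
  shows "real (card {f \<in> Cn n. \<not> xi_independent n (2 powr (- real n / 4)) f g})
           \<le> 2 powr (real n / 2 + 2)"
proof -
  define e where "e = 2 powr (- real n / 4)"
  define B where "B = {s\<in>cube n. \<not> xi_independent n e (negpar n s) g}"
  have eqimg: "{f \<in> Cn n. \<not> xi_independent n e f g} = negpar n ` B"
    unfolding Cn_def B_def by auto
  have finB: "finite B" unfolding B_def by simp
  have cardle: "card {f \<in> Cn n. \<not> xi_independent n e f g} \<le> card B"
    unfolding eqimg by (rule card_image_le[OF finB])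
  have "real (card {f \<in> Cn n. \<not> xi_independent n e f g}) \<le> 2 powr (real n / 2 + 2)"
  proof (cases "n \<le> 4")
    case True
    have "card B \<le> card (cube n)" unfolding B_def by (rule card_mono) auto
    hence "real (card {f \<in> Cn n. \<not> xi_independent n e f g}) \<le> real ((2::nat)^n)"
      using cardle card_cube[of n] by linarith
    also have "\<dots> = 2 powr real n" by (simp add: powr_realpow)
    also have "\<dots> \<le> 2 powr (real n / 2 + 2)" using True by (intro powr_mono) auto
    finally show ?thesis .
  next
    case False
    have n5: "n \<ge> 5" using False by simp
    define q where "q = 2 powr (real n / 4)"
    have qpos: "q > 0" unfolding q_def by simp
    have q4: "q ^ 4 = 2 ^ n"
    proof -
      have "q ^ 4 = 2 powr (of_nat 4 * (real n / 4))" unfolding q_def by (rule powr_power) simp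
      also have "\<dots> = 2 powr real n" by simp
      also have "\<dots> = 2 ^ n" by (simp add: powr_realpow)
      finally show ?thesis .
    qed
    have eq: "e = 1 / q" unfolding e_def q_def
      by (simp add: powr_minus_divide[symmetric])
    have rhs: "2 powr (real n / 2 + 2) = 4 * q^2"
    proof -
      have "q ^ 2 = 2 powr (of_nat 2 * (real n / 4))" unfolding q_def by (rule powr_power) simp
      also have "\<dots> = 2 powr (real n / 2)" by simp
      finally show ?thesis by (simp add: powr_add)
    qed
    have q32: "q ^ 4 \<ge> 32"
    proof -
      have "(2::real) ^ 5 \<le> 2 ^ n" using False by (intro power_increasing) auto
      thus ?thesis using q4 by simp
    qed
    define T where "T = (q^4 - 2) / q - 4"
    have Tpos: "T > 0" unfolding T_def using final_arith(1)[OF q32 qpos, of 0] by simp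
    define z where "z = replicate n False"
    define C where "C = {s\<in>cube n. s \<noteq> z \<and> T^2 \<le> (DD n g s)^2}"
    have BC: "B \<subseteq> insert z C"
    proof
      fix s assume sB: "s \<in> B"
      show "s \<in> insert z C"
      proof (cases "s = z")
        case False
        have sc: "s \<in> cube n" and bad: "\<not> xi_independent n e (negpar n s) g"
          using sB unfolding B_def by auto
        have "e * (2^n - 2) - 4 < \<bar>DD n g s\<bar>"
          by (rule key[OF assms sc _ _ bad]) (use False z_def n5 in auto)
        moreover have "e * (2^n - 2) - 4 = T" unfolding T_def eq q4[symmetric] by simp
        ultimately have "T < \<bar>DD n g s\<bar>" by simp
        hence "T^2 \<le> \<bar>DD n g s\<bar>^2" using Tpos by (intro power_mono) auto
        thus ?thesis using sc False unfolding C_def by simp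
      qed simp
    qed
    have finC: "finite C" unfolding C_def by simp
    have "card B \<le> card (insert z C)" by (rule card_mono) (use finC BC in auto)
    also have "\<dots> \<le> card C + 1" by (simp add: card_insert_if finC)
    finally have cB: "real (card B) \<le> real (card C) + 1" by linarith
    have "real (card C) * T^2 = (\<Sum>s\<in>C. T^2)" by simp
    also have "\<dots> \<le> (\<Sum>s\<in>C. (DD n g s)^2)" by (rule sum_mono) (simp add: C_def)
    also have "\<dots> \<le> (\<Sum>s\<in>cube n. (DD n g s)^2)"
      by (rule sum_mono2) (auto simp: C_def)
    also have "\<dots> = (q^4)^2" using parseval[OF assms] q4 by simp
    finally have "real (card C) * ((q^4 - 2) / q - 4)^2 \<le> (q^4)^2" unfolding T_def .
    from final_arith(2)[OF q32 qpos this] have "real (card C) + 1 \<le> 4 * q^2" by simp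
    thus ?thesis using cardle cB rhs by linarith
  qed
  thus ?thesis unfolding e_def .
qed

end
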